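(* Let $n\ge 1$, let $v\in\mathbb{S}^{n-1}=\{v\in\mathbb{R}^n:\|v\|=1\}$, and for class parameters $\alpha_k>0$, $v_k\in\mathbb{S}^{n-1}$, $b_k\in\mathbb{R}$ define the logit $u_k(x)=-\alpha_k B^{v_k}(x)+b_k$. (Poincaré) Fix $x\in\mathbb{R}^n$; for all $K<0$ with $|K|$ small enough, $x$ lies in the Poincaré ball $\mathbb{P}^n_K$. Then, as $K\to 0^-$, $$B^{v}(x)\to -2\langle v,x\rangle,\qquad u_k(x)\to 2\alpha_k\langle v_k,x\rangle+b_k .$$ (Lorentz) Fix $x_s\in\mathbb{R}^n$ and, for each $K<0$, let $x=[x_t,x_s^\top]^\top\in\mathbb{L}^n_K$ with $x_t=\sqrt{-1/K+\|x_s\|^2}$. Then, as $K\to 0^-$, $$B^{v}(x)\to -\langle v,x_s\rangle,\qquad u_k(x)\to \alpha_k\langle v_k,x_s\rangle+b_k .$$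
   Context: For $K<0$, the Poincaré ball is $\mathbb{P}^n_K=\{x\in\mathbb{R}^n:\|x\|^2<-1/K\}$, and its Busemann function in direction $v\in\mathbb{S}^{n-1}$ (for the geodesic ray from the origin with initial unit velocity $v$) is $B^v(x)=\frac{1}{\sqrt{-K}}\log\!\left(\frac{\|v-\sqrt{-K}\,x\|^2}{1+K\|x\|^2}\right)$. The Lorentz model is $\mathbb{L}^n_K=\{x=[x_t,x_s^\top]^\top\in\mathbb{R}^{n+1}: -x_t^2+\|x_s\|^2=1/K,\ x_t>0\}$, with Busemann function $B^v(x)=\frac{1}{\sqrt{-K}}\log\!\left(\sqrt{-K}\,(x_t-\langle x_s,v\rangle)\right)$. Here $\langle\cdot,\cdot\rangle$ and $\|\cdot\|$ are the Euclidean inner product and norm. *)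

theory Defs
  imports "HOL-Analysis.Analysis"
begin

definition poincare_ball :: "real \<Rightarrow> 'a::euclidean_space set" where
  "poincare_ball K = {x. (norm x)\<^sup>2 < - 1 / K}"

definition busemann_P :: "real \<Rightarrow> 'a::euclidean_space \<Rightarrow> 'a \<Rightarrow> real" where
  "busemann_P K v x =
     (1 / sqrt (- K)) * ln ((norm (v - sqrt (- K) *\<^sub>R x))\<^sup>2 / (1 + K * (norm x)\<^sup>2))"

definition lorentz_model :: "real \<Rightarrow> (real \<times> 'a::euclidean_space) set" where
  "lorentz_model K = {(xt, xs). - xt\<^sup>2 + (norm xs)\<^sup>2 = 1 / K \<and> xt > 0}"

definition busemann_L :: "real \<Rightarrow> 'a::euclidean_space \<Rightarrow> real \<times> 'a \<Rightarrow> real" where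
  "busemann_L K v x = (1 / sqrt (- K)) * ln (sqrt (- K) * (fst x - inner (snd x) v))"

definition lorentz_lift :: "real \<Rightarrow> 'a::euclidean_space \<Rightarrow> real \<times> 'a" where
  "lorentz_lift K xs = (sqrt (- 1 / K + (norm xs)\<^sup>2), xs)"

end

theory Submission
  imports Defs
begin

lemma lim_quot:
  assumes "(h has_real_derivative L) (at 0)" "h 0 = 0"
  shows "((\<lambda>s. h s / s) \<longlongrightarrow> L) (at 0)"
  using assms by (simp add: DERIV_def)

lemma sqrt_filterlim: "filterlim (\<lambda>K::real. sqrt (- K)) (at_right 0) (at_left 0)"
proof -
  have "((\<lambda>K::real. sqrt (- K)) \<longlongrightarrow> sqrt (- 0)) (at 0)"
    by (intro tendsto_intros)
  then have "((\<lambda>K::real. sqrt (- K)) \<longlongrightarrow> 0) (at_left 0)"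
    using filterlim_at_split by auto
  moreover have "eventually (\<lambda>K::real. sqrt (-K) \<in> {0<..} \<and> sqrt (-K) \<noteq> 0) (at_left 0)"
    unfolding eventually_at_left_field by (intro exI[of _ "-1"]) simp
  ultimately show ?thesis by (simp add: filterlim_at)
qed

lemma compose_sqrt:
  assumes "(g \<longlongrightarrow> L) (at_right 0)"
  shows "((\<lambda>K. g (sqrt (-K))) \<longlongrightarrow> L) (at_left 0)"
  using filterlim_compose[OF assms sqrt_filterlim] .

lemma poinc_s:
  fixes v x :: "'a::euclidean_space"
  assumes "norm v = 1"
  shows "((\<lambda>s. (1/s) * ln ((norm (v - s *\<^sub>R x))\<^sup>2 / (1 - s^2 * (norm x)\<^sup>2))) \<longlongrightarrow> - 2 * inner v x) (at_right 0)"
proof -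
  define aa where "aa = inner v x"
  define r where "r = (norm x)\<^sup>2"
  define h where "h = (\<lambda>s::real. ln (1 - 2 * s * aa + s^2*r) - ln (1 - s^2*r))"
  have d: "(h has_real_derivative (-2*aa)) (at 0)"
    unfolding h_def by (auto intro!: derivative_eq_intros)
  have "((\<lambda>s. h s / s) \<longlongrightarrow> -2*aa) (at 0)" by (rule lim_quot[OF d]) (simp add: h_def)
  then have L: "((\<lambda>s. h s / s) \<longlongrightarrow> -2*aa) (at_right 0)" using filterlim_at_split by auto
  have "((\<lambda>s. 1 - 2 * s * aa + s^2*r) \<longlongrightarrow> 1 - 2 * 0 * aa + 0^2*r) (at_right (0::real))" by (intro tendsto_intros)
  then have e1: "eventually (\<lambda>s. 1 - 2 * s * aa + s^2*r > 0) (at_right 0)" by (rule order_tendstoD) simp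
  have "((\<lambda>s. 1 - s^2*r) \<longlongrightarrow> 1 - 0^2*r) (at_right (0::real))" by (intro tendsto_intros)
  then have e2: "eventually (\<lambda>s. 1 - s^2*r > 0) (at_right 0)" by (rule order_tendstoD) simp
  have "eventually (\<lambda>s. h s / s = (1/s) * ln ((norm (v - s *\<^sub>R x))\<^sup>2 / (1 - s^2 * (norm x)\<^sup>2))) (at_right 0)"
    using e1 e2
  proof eventually_elim
    case (elim s)
    have "(norm (v - s *\<^sub>R x))\<^sup>2 = 1 - 2 * s * aa + s^2*r"
    proof -
      have "(norm (v - s *\<^sub>R x))\<^sup>2 = inner (v - s *\<^sub>R x) (v - s *\<^sub>R x)"
        by (rule power2_norm_eq_inner)
      also have "\<dots> = inner v v - 2 * s * inner v x + s^2 * inner x x"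
        by (simp add: inner_diff_left inner_diff_right inner_commute algebra_simps power2_eq_square)
      also have "inner v v = 1" using assms by (simp add: power2_norm_eq_inner[symmetric])
      also have "inner x x = r" by (simp add: r_def power2_norm_eq_inner)
      finally show ?thesis by (simp add: aa_def)
    qed
    then show ?case using elim by (simp add: h_def r_def ln_div)
  qed
  with L have "((\<lambda>s. (1/s) * ln ((norm (v - s *\<^sub>R x))\<^sup>2 / (1 - s^2 * (norm x)\<^sup>2))) \<longlongrightarrow> -2*aa) (at_right 0)"
    by (rule Lim_transform_eventually)
  then show ?thesis by (simp add: aa_def)
qed

lemma poinc:
  fixes v x :: "'a::euclidean_space"
  assumes "norm v = 1"
  shows "((\<lambda>K. busemann_P K v x) \<longlongrightarrow> - 2 * inner v x) (at_left 0)"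
proof -
  have "eventually (\<lambda>K. (1/sqrt (-K)) * ln ((norm (v - sqrt (-K) *\<^sub>R x))\<^sup>2 / (1 - (sqrt (-K))^2 * (norm x)\<^sup>2)) = busemann_P K v x) (at_left 0)"
  proof -
    have "(1/sqrt (-K)) * ln ((norm (v - sqrt (-K) *\<^sub>R x))\<^sup>2 / (1 - (sqrt (-K))^2 * (norm x)\<^sup>2)) = busemann_P K v x" if "K < 0" for K
      using that by (simp add: busemann_P_def)
    then show ?thesis unfolding eventually_at_left_field by (intro exI[of _ "-1"]) simp
  qed
  with compose_sqrt[OF poinc_s[OF assms, of x]] show ?thesis by (rule Lim_transform_eventually)
qed

lemma lor_s:
  fixes v xs :: "'a::euclidean_space"
  shows "((\<lambda>s. (1/s) * ln (sqrt (1 + s^2 * (norm xs)\<^sup>2) - s * inner xs v)) \<longlongrightarrow> - inner v xs) (at_right 0)"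
proof -
  define c where "c = inner xs v"
  define r where "r = (norm xs)\<^sup>2"
  define h where "h = (\<lambda>s::real. ln (sqrt (1 + s^2 * r) - s * c))"
  have d: "(h has_real_derivative (-c)) (at 0)"
    unfolding h_def by (auto intro!: derivative_eq_intros)
  have "((\<lambda>s. h s / s) \<longlongrightarrow> -c) (at 0)" by (rule lim_quot[OF d]) (simp add: h_def)
  then have L: "((\<lambda>s. h s / s) \<longlongrightarrow> -c) (at_right 0)" using filterlim_at_split by auto
  show ?thesis using L by (simp add: h_def r_def c_def inner_commute)
qed

lemma lor:
  fixes v xs :: "'a::euclidean_space"
  shows "((\<lambda>K. busemann_L K v (lorentz_lift K xs)) \<longlongrightarrow> - inner v xs) (at_left 0)"
proof -
  have "eventually (\<lambda>K. (1/sqrt (-K)) * ln (sqrt (1 + (sqrt (-K))^2 * (norm xs)\<^sup>2) - sqrt (-K) * inner xs v) = busemann_L K v (lorentz_lift K xs)) (at_left 0)"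
  proof -
    have "sqrt (-K) * (sqrt (- 1 / K + (norm xs)\<^sup>2) - inner xs v) = sqrt (1 + (sqrt (-K))^2 * (norm xs)\<^sup>2) - sqrt (-K) * inner xs v" if "K < 0" for K
    proof -
      have "sqrt (-K) * sqrt (- 1 / K + (norm xs)\<^sup>2) = sqrt (-K * (- 1 / K + (norm xs)\<^sup>2))"
        by (metis real_sqrt_mult)
      also have "-K * (- 1 / K + (norm xs)\<^sup>2) = 1 + (sqrt (-K))^2 * (norm xs)\<^sup>2"
        using that by (simp add: field_simps)
      finally show ?thesis by (simp add: right_diff_distrib)
    qed
    then show ?thesis unfolding eventually_at_left_field
      by (intro exI[of _ "-1"]) (simp add: busemann_L_def lorentz_lift_def)
  qed
  with compose_sqrt[OF lor_s[of xs v]] show ?thesis by (rule Lim_transform_eventually)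
qed

lemma ball_part:
  fixes x :: "'a::euclidean_space"
  shows "\<exists>\<delta>>0. \<forall>K. - \<delta> < K \<and> K < 0 \<longrightarrow> x \<in> poincare_ball K"
proof (intro exI[of _ "1 / ((norm x)\<^sup>2 + 1)"] conjI allI impI)
  have p: "(norm x)\<^sup>2 + 1 > 0" using zero_le_power2[of "norm x"] by linarith
  then show "0 < 1 / ((norm x)\<^sup>2 + 1)" by simp
  fix K :: real assume h: "- (1 / ((norm x)\<^sup>2 + 1)) < K \<and> K < 0"
  from h have "-K * ((norm x)\<^sup>2 + 1) < 1" using p by (simp add: field_simps)
  then have "(norm x)\<^sup>2 * (-K) < 1 + K" by (simp add: algebra_simps)
  then have "(norm x)\<^sup>2 < - 1 / K" using h by (simp add: field_simps)
  then show "x \<in> poincare_ball K" by (simp add: poincare_ball_def)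
qed

lemma lift_part:
  fixes xs :: "'a::euclidean_space"
  shows "\<forall>K<0. lorentz_lift K xs \<in> lorentz_model K"
proof (intro allI impI)
  fix K :: real assume "K < 0"
  then have q: "1 / K < 0" by simp
  have "1 / K < (norm xs)\<^sup>2" using q zero_le_power2[of "norm xs"] by linarith
  then have "- 1 / K + (norm xs)\<^sup>2 > 0" by simp
  then show "lorentz_lift K xs \<in> lorentz_model K"
    by (simp add: lorentz_lift_def lorentz_model_def)
qed

theorem theorem1:
  fixes v :: "'a::euclidean_space"
    and \<alpha> :: "'k \<Rightarrow> real" and vk :: "'k \<Rightarrow> 'a" and b :: "'k \<Rightarrow> real"
    and x xs :: 'a
  assumes "norm v = 1"
    and "\<And>k. \<alpha> k > 0"
    and "\<And>k. norm (vk k) = 1"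
  shows
    "(\<exists>\<delta>>0. \<forall>K. - \<delta> < K \<and> K < 0 \<longrightarrow> x \<in> poincare_ball K)
     \<and> ((\<lambda>K. busemann_P K v x) \<longlongrightarrow> - 2 * inner v x) (at_left 0)
     \<and> (\<forall>k. ((\<lambda>K. - \<alpha> k * busemann_P K (vk k) x + b k)
              \<longlongrightarrow> 2 * \<alpha> k * inner (vk k) x + b k) (at_left 0))
     \<and> (\<forall>K<0. lorentz_lift K xs \<in> lorentz_model K)
     \<and> ((\<lambda>K. busemann_L K v (lorentz_lift K xs)) \<longlongrightarrow> - inner v xs) (at_left 0)
     \<and> (\<forall>k. ((\<lambda>K. - \<alpha> k * busemann_L K (vk k) (lorentz_lift K xs) + b k)
              \<longlongrightarrow> \<alpha> k * inner (vk k) xs + b k) (at_left 0))"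
proof (intro conjI)
  show "\<exists>\<delta>>0. \<forall>K. - \<delta> < K \<and> K < 0 \<longrightarrow> x \<in> poincare_ball K" by (rule ball_part)
  show "((\<lambda>K. busemann_P K v x) \<longlongrightarrow> - 2 * inner v x) (at_left 0)" by (rule poinc[OF assms(1)])
  show "\<forall>k. ((\<lambda>K. - \<alpha> k * busemann_P K (vk k) x + b k) \<longlongrightarrow> 2 * \<alpha> k * inner (vk k) x + b k) (at_left 0)"
  proof (rule allI)
    fix k
    have "((\<lambda>K. - \<alpha> k * busemann_P K (vk k) x + b k) \<longlongrightarrow> - \<alpha> k * (- 2 * inner (vk k) x) + b k) (at_left 0)"
      by (intro tendsto_intros poinc assms(3))
    then show "((\<lambda>K. - \<alpha> k * busemann_P K (vk k) x + b k) \<longlongrightarrow> 2 * \<alpha> k * inner (vk k) x + b k) (at_left 0)"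
      by (simp add: algebra_simps)
  qed
  show "\<forall>K<0. lorentz_lift K xs \<in> lorentz_model K" by (rule lift_part)
  show "((\<lambda>K. busemann_L K v (lorentz_lift K xs)) \<longlongrightarrow> - inner v xs) (at_left 0)" by (rule lor)
  show "\<forall>k. ((\<lambda>K. - \<alpha> k * busemann_L K (vk k) (lorentz_lift K xs) + b k) \<longlongrightarrow> \<alpha> k * inner (vk k) xs + b k) (at_left 0)"
  proof (rule allI)
    fix k
    have "((\<lambda>K. - \<alpha> k * busemann_L K (vk k) (lorentz_lift K xs) + b k) \<longlongrightarrow> - \<alpha> k * (- inner (vk k) xs) + b k) (at_left 0)"
      by (intro tendsto_intros lor)
    then show "((\<lambda>K. - \<alpha> k * busemann_L K (vk k) (lorentz_lift K xs) + b k) \<longlongrightarrow> \<alpha> k * inner (vk k) xs + b k) (at_left 0)"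
      by simp
  qed
qed

end
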